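(* Let $$N=\begin{pmatrix}2&1&0&0&1&2\\1&2&2&1&0&0\\0&0&1&2&2&1\end{pmatrix},\qquad M=\begin{pmatrix}3&3&2&1&1&2\\2&1&1&2&3&3\end{pmatrix},$$ and let $\phi:K[x_1,\dots,x_6]\to K[t_1,t_2,t_3]$, $x_i\mapsto \mathbf t^{\mathbf b_i}$ ($\mathbf b_i$ the columns of $N$). Then $I_N\subseteq I_M$, and $\mathrm{rad}((\phi(I_M))^e)=\mathrm{rad}(\phi(x_3^3-x_1x_2),\phi(x_4^3-x_5x_6))$, but $I_M\neq \mathrm{rad}(I_N+(x_3^3-x_1x_2,\;x_4^3-x_5x_6))$ (no power of $x_6^2-x_3x_4x_5\in I_M$ lies in $I_N+(x_3^3-x_1x_2,x_4^3-x_5x_6)$). In particular, the hypothesis $\Gamma(N)=V(I_N)$ cannot be dropped from Theorem 3.1 (and indeed $\Gamma(N)\ne V(I_N)$ here).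
   Context: $K$ is a field. For an integer matrix $M$ with columns $\mathbf a_i$, the toric ideal $I_M\subseteq K[x_1,\dots,x_n]$ is the kernel of $x_i\mapsto\mathbf t^{\mathbf a_i}$ into a Laurent polynomial ring. $(\phi(I_M))^e$ is the ideal of $K[t_1,t_2,t_3]$ generated by $\phi(I_M)$. $\Gamma(N)=\{(\mathbf T^{\mathbf b_1},\dots,\mathbf T^{\mathbf b_n}):\mathbf T\in\bar K^3\}$ and $V(I_N)$ is the zero set of $I_N$ in $\bar K^6$. Theorem 3.1 states: if $N$ has non-negative entries, $I_N\subseteq I_M$ and $\Gamma(N)=V(I_N)$, then for $f_1,\dots,f_s\in I_M$, $I_M=\mathrm{rad}(I_N+(f_1,\dots,f_s))$ iff $\mathrm{rad}((\phi(I_M))^e)=\mathrm{rad}(\phi(f_1),\dots,\phi(f_s))$. *)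

theory Defs
  imports "HOL-Library.Poly_Mapping" "HOL-Algebra.Algebraic_Closure_Type"
begin

(* Multivariate polynomials over 'a: finitely supported maps from monomials
   (exponent vectors nat \<Rightarrow>\<^sub>0 nat, variable i = x_{i+1}) to coefficients. *)
type_synonym 'a mpoly = "(nat \<Rightarrow>\<^sub>0 nat) \<Rightarrow>\<^sub>0 'a"
type_synonym 'a lpoly = "(nat \<Rightarrow>\<^sub>0 int) \<Rightarrow>\<^sub>0 'a"

definition Var :: "nat \<Rightarrow> 'a::comm_ring_1 mpoly" where
  "Var i = Poly_Mapping.single (Poly_Mapping.single i 1) 1"

definition poly_ring :: "nat \<Rightarrow> 'a::comm_ring_1 mpoly set" where
  "poly_ring n = {p. \<forall>m \<in> Poly_Mapping.keys p. Poly_Mapping.keys m \<subseteq> {..<n}}"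

definition psubst :: "(nat \<Rightarrow> ('m::comm_monoid_add \<Rightarrow>\<^sub>0 'a::comm_ring_1)) \<Rightarrow> 'a mpoly \<Rightarrow> ('m \<Rightarrow>\<^sub>0 'a)" where
  "psubst \<sigma> p = (\<Sum>m \<in> Poly_Mapping.keys p.
      Poly_Mapping.single 0 (Poly_Mapping.lookup p m) *
      (\<Prod>i \<in> Poly_Mapping.keys m. \<sigma> i ^ Poly_Mapping.lookup m i))"

definition lmono :: "int list \<Rightarrow> 'a::comm_ring_1 lpoly" where
  "lmono a = Poly_Mapping.single (Poly_Mapping.nth a) 1"

definition pmono :: "nat list \<Rightarrow> 'a::comm_ring_1 mpoly" where
  "pmono a = Poly_Mapping.single (Poly_Mapping.nth a) 1"

definition toric_ideal :: "int list list \<Rightarrow> 'a::comm_ring_1 mpoly set" where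
  "toric_ideal cols = {f \<in> poly_ring (length cols).
      psubst (\<lambda>i. lmono (cols ! i)) f = (0 :: 'a lpoly)}"

definition is_ideal_in :: "'a::comm_ring_1 set \<Rightarrow> 'a set \<Rightarrow> bool" where
  "is_ideal_in R I \<longleftrightarrow> I \<subseteq> R \<and> 0 \<in> I \<and> (\<forall>a\<in>I. \<forall>b\<in>I. a + b \<in> I) \<and>
     (\<forall>r\<in>R. \<forall>a\<in>I. r * a \<in> I)"

definition ideal_gen_in :: "'a::comm_ring_1 set \<Rightarrow> 'a set \<Rightarrow> 'a set" where
  "ideal_gen_in R S = \<Inter>{I. is_ideal_in R I \<and> S \<subseteq> I}"

definition rad_in :: "'a::comm_ring_1 set \<Rightarrow> 'a set \<Rightarrow> 'a set" where
  "rad_in R I = {f \<in> R. \<exists>k>0. f ^ k \<in> I}"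

(* the concrete matrices, by columns *)
definition N_cols :: "int list list" where
  "N_cols = [[2,1,0],[1,2,0],[0,2,1],[0,1,2],[1,0,2],[2,0,1]]"

definition M_cols :: "int list list" where
  "M_cols = [[3,2],[3,1],[2,1],[1,2],[1,3],[2,3]]"

definition phiN :: "'a::comm_ring_1 mpoly \<Rightarrow> 'a mpoly" where
  "phiN = psubst (\<lambda>i. pmono (map nat (N_cols ! i)))"

definition eval_ac :: "'a::field mpoly \<Rightarrow> 'a alg_closure list \<Rightarrow> 'a alg_closure" where
  "eval_ac p x = (\<Sum>m \<in> Poly_Mapping.keys p. to_ac (Poly_Mapping.lookup p m) *
      (\<Prod>i \<in> Poly_Mapping.keys m. (x ! i) ^ Poly_Mapping.lookup m i))"

definition zero_set :: "nat \<Rightarrow> 'a::field mpoly set \<Rightarrow> 'a alg_closure list set" where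
  "zero_set n I = {x. length x = n \<and> (\<forall>f\<in>I. eval_ac f x = 0)}"

definition Gamma :: "nat \<Rightarrow> int list list \<Rightarrow> 'a::field alg_closure list set" where
  "Gamma d cols = {map (\<lambda>b. \<Prod>j<d. T j ^ nat (b ! j)) cols | T. True}"

end

theory Submission
  imports Defs
begin


abbreviation lk where "lk \<equiv> Poly_Mapping.lookup"
abbreviation ks where "ks \<equiv> Poly_Mapping.keys"
abbreviation sg where "sg \<equiv> Poly_Mapping.single"

definition PP :: "(nat \<Rightarrow> ('m::comm_monoid_add \<Rightarrow>\<^sub>0 'a::comm_ring_1)) \<Rightarrow> (nat \<Rightarrow>\<^sub>0 nat) \<Rightarrow> ('m \<Rightarrow>\<^sub>0 'a)" where
  "PP \<sigma> m = (\<Prod>i \<in> ks m. \<sigma> i ^ lk m i)"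

lemma psubst_PP: "psubst \<sigma> p = (\<Sum>m \<in> ks p. sg 0 (lk p m) * PP \<sigma> m)"
  unfolding psubst_def PP_def by simp

lemma psubst_sup:
  assumes "finite S" "ks p \<subseteq> S"
  shows "psubst \<sigma> p = (\<Sum>m \<in> S. sg 0 (lk p m) * PP \<sigma> m)"
  unfolding psubst_PP
  by (rule sum.mono_neutral_left) (use assms in \<open>auto simp: in_keys_iff\<close>)

lemma PP_sup:
  assumes "finite T" "ks m \<subseteq> T"
  shows "PP \<sigma> m = (\<Prod>i \<in> T. \<sigma> i ^ lk m i)"
  unfolding PP_def
  by (rule prod.mono_neutral_left) (use assms in \<open>auto simp: in_keys_iff\<close>)

lemma PP_add: "PP \<sigma> (a + b) = PP \<sigma> a * PP \<sigma> b"
proof -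
  let ?T = "ks a \<union> ks b"
  have "PP \<sigma> (a+b) = (\<Prod>i \<in> ?T. \<sigma> i ^ lk (a+b) i)"
    by (rule PP_sup) (use keys_add[of a b] in auto)
  also have "\<dots> = (\<Prod>i \<in> ?T. \<sigma> i ^ lk a i) * (\<Prod>i \<in> ?T. \<sigma> i ^ lk b i)"
    by (simp add: lookup_add power_add prod.distrib)
  also have "\<dots> = PP \<sigma> a * PP \<sigma> b"
    by (subst (1 2) PP_sup[of ?T]) auto
  finally show ?thesis .
qed

lemma PP_zero [simp]: "PP \<sigma> 0 = 1"
  by (simp add: PP_def)

lemma psubst_zero [simp]: "psubst \<sigma> 0 = 0"
  by (simp add: psubst_def)

lemma psubst_single: "psubst \<sigma> (sg m c) = sg 0 c * PP \<sigma> m"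
  by (simp add: psubst_PP)

lemma psubst_add: "psubst \<sigma> (p + q) = psubst \<sigma> p + psubst \<sigma> q"
proof -
  let ?S = "ks p \<union> ks q"
  have "psubst \<sigma> (p+q) = (\<Sum>m \<in> ?S. sg 0 (lk (p+q) m) * PP \<sigma> m)"
    by (rule psubst_sup) (use keys_add[of p q] in auto)
  also have "\<dots> = (\<Sum>m \<in> ?S. sg 0 (lk p m) * PP \<sigma> m) + (\<Sum>m \<in> ?S. sg 0 (lk q m) * PP \<sigma> m)"
    by (simp add: lookup_add single_add distrib_right sum.distrib)
  also have "\<dots> = psubst \<sigma> p + psubst \<sigma> q"
    by (subst (1 2) psubst_sup[of ?S]) auto
  finally show ?thesis .
qed

lemma psubst_sum: "psubst \<sigma> (\<Sum>i\<in>I. f i) = (\<Sum>i\<in>I. psubst \<sigma> (f i))"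
  by (induction I rule: infinite_finite_induct) (auto simp: psubst_add)

lemma poly_expand: "p = (\<Sum>m \<in> ks p. sg m (lk p m))"
  by (rule poly_mapping_eqI) (simp add: lookup_sum lookup_single when_def in_keys_iff)

lemma psubst_mult: "psubst \<sigma> (p * q) = psubst \<sigma> p * psubst \<sigma> q"
proof -
  have "p * q = (\<Sum>a \<in> ks p. \<Sum>b \<in> ks q. sg (a + b) (lk p a * lk q b))"
    apply (subst (1) poly_expand[of p], subst (1) poly_expand[of q])
    by (simp add: sum_distrib_left sum_distrib_right mult_single sum.swap[of _ "ks q"])
  then have "psubst \<sigma> (p * q) = (\<Sum>a \<in> ks p. \<Sum>b \<in> ks q. sg 0 (lk p a * lk q b) * PP \<sigma> (a + b))"
    by (simp add: psubst_sum psubst_single)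
  also have "\<dots> = (\<Sum>a \<in> ks p. \<Sum>b \<in> ks q. (sg 0 (lk p a) * PP \<sigma> a) * (sg 0 (lk q b) * PP \<sigma> b))"
    by (intro sum.cong refl) (simp add: PP_add mult_single[of 0 _ 0, simplified, symmetric] ac_simps)
  also have "\<dots> = psubst \<sigma> p * psubst \<sigma> q"
    by (simp add: psubst_PP sum_distrib_left sum_distrib_right sum.swap[of _ "ks q"])
  finally show ?thesis .
qed

lemma psubst_uminus: "psubst \<sigma> (- p) = - psubst \<sigma> p"
  using psubst_add[of \<sigma> p "-p"] by (simp add: eq_neg_iff_add_eq_0 add.commute)

lemma psubst_diff: "psubst \<sigma> (p - q) = psubst \<sigma> p - psubst \<sigma> q"
  using psubst_add[of \<sigma> p "-q"] by (simp add: psubst_uminus)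

lemma psubst_one [simp]: "psubst \<sigma> 1 = 1"
  using psubst_single[of \<sigma> 0 1] by simp

lemma psubst_power: "psubst \<sigma> (p ^ n) = psubst \<sigma> p ^ n"
  by (induction n) (simp_all add: psubst_mult)

lemma psubst_Var [simp]: "psubst \<sigma> (Var i) = \<sigma> i"
  by (simp add: Var_def psubst_single PP_def)

lemmas psubst_simps = psubst_add psubst_mult psubst_diff psubst_uminus psubst_power

definition Eb :: "(nat \<Rightarrow> 'm::comm_monoid_add) \<Rightarrow> (nat \<Rightarrow>\<^sub>0 nat) \<Rightarrow> 'm" where
  "Eb \<beta> m = (\<Sum>i \<in> ks m. \<Sum>_ <lk m i. \<beta> i)"

lemma sg_pow: "(sg x (1::'a::comm_ring_1)) ^ k = sg (\<Sum>_<k. x) 1"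
  by (induction k) (simp_all add: mult_single add.commute)

lemma sg_prod: "(\<Prod>i\<in>I. sg (y i) (1::'a::comm_ring_1)) = sg (\<Sum>i\<in>I. y i) 1"
  by (induction I rule: infinite_finite_induct) (simp_all add: mult_single)

lemma PP_mono: "PP (\<lambda>i. sg (\<beta> i) (1::'a::comm_ring_1)) m = sg (Eb \<beta> m) 1"
  by (simp add: PP_def Eb_def sg_pow sg_prod)

lemma psubst_mono: "psubst (\<lambda>i. sg (\<beta> i) (1::'a::comm_ring_1)) f = (\<Sum>m \<in> ks f. sg (Eb \<beta> m) (lk f m))"
  by (simp add: psubst_PP PP_mono mult_single)

lemma lk_psubst_mono: "lk (psubst (\<lambda>i. sg (\<beta> i) (1::'a::comm_ring_1)) f) e = (\<Sum>m \<in> {m \<in> ks f. Eb \<beta> m = e}. lk f m)"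
  by (simp add: psubst_mono lookup_sum lookup_single when_def sum.inter_filter)

lemma lk_Eb: "lk (Eb \<beta> m) j = (\<Sum>i \<in> ks m. of_nat (lk m i) * lk (\<beta> i) j)"
  by (simp add: Eb_def lookup_sum)

lemma lk_Eb6: "ks m \<subseteq> {..<6} \<Longrightarrow> lk (Eb \<beta> m) j = (\<Sum>i <6. of_nat (lk m i) * lk (\<beta> i) j)"
  unfolding lk_Eb by (rule sum.mono_neutral_left) (auto simp: in_keys_iff)

lemma sum6: "(\<Sum>i<6::nat. F i) = F 0 + F 1 + F 2 + F 3 + F 4 + F (5::nat)"
  by (simp add: eval_nat_numeral ac_simps)

lemma fiber_regroup:
  assumes "finite K" "\<And>e. (\<Sum>m \<in> {m\<in>K. F m = e}. c m) = (0::'a::comm_monoid_add)"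
  shows "(\<Sum>m \<in> {m\<in>K. P (F m)}. c m) = 0"
proof -
  have "(\<Sum>m \<in> {m\<in>K. P (F m)}. c m) = (\<Sum>m \<in> K. if P (F m) then c m else 0)"
    by (simp add: sum.inter_filter assms(1))
  also have "\<dots> = (\<Sum>e \<in> F ` K. \<Sum>m \<in> {m\<in>K. F m = e}. if P (F m) then c m else 0)"
    by (rule sum.image_gen) (fact assms(1))
  also have "\<dots> = (\<Sum>e \<in> F ` K. if P e then (\<Sum>m \<in> {m\<in>K. F m = e}. c m) else 0)"
    by (intro sum.cong refl) auto
  also have "\<dots> = 0" by (rule sum.neutral) (use assms(2) in auto)
  finally show ?thesis .
qed

definition "\<beta>Ni i = Poly_Mapping.nth (N_cols ! i)"
definition "\<beta>Nn i = Poly_Mapping.nth (map nat (N_cols ! i))"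
definition "\<beta>M i = Poly_Mapping.nth (M_cols ! i)"

definition nN :: "(nat \<Rightarrow>\<^sub>0 nat) \<Rightarrow> nat \<Rightarrow> nat" where
  "nN m j = (if j = 0 then 2 * lk m 0 + lk m 1 + lk m 4 + 2 * lk m 5
     else if j = 1 then lk m 0 + 2 * lk m 1 + 2 * lk m 2 + lk m 3
     else if j = 2 then lk m 2 + 2 * lk m 3 + 2 * lk m 4 + lk m 5 else 0)"

lemma j_cases: "j = 0 \<or> j = 1 \<or> j = 2 \<or> (j::nat) \<ge> 3" by auto

lemma EbNi: "ks m \<subseteq> {..<6} \<Longrightarrow> lk (Eb \<beta>Ni m) j = int (nN m j)"
  apply (simp add: lk_Eb6 sum6 \<beta>Ni_def N_cols_def nN_def)
  using j_cases[of j] by (auto simp: nth_default_def)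

lemma EbNn_lk: "ks m \<subseteq> {..<6} \<Longrightarrow> lk (Eb \<beta>Nn m) j = nN m j"
  apply (simp add: lk_Eb6 sum6 \<beta>Nn_def N_cols_def nN_def)
  using j_cases[of j] by (auto simp: nth_default_def)

lemma EbNn: "ks m \<subseteq> {..<6} \<Longrightarrow> Eb \<beta>Nn m = sg 0 (nN m 0) + sg 1 (nN m 1) + sg 2 (nN m 2)"
  apply (rule poly_mapping_eqI)
  subgoal for j
  using j_cases[of j] by (auto simp: EbNn_lk lookup_add lookup_single nN_def) 
  done

lemma EbM: "ks m \<subseteq> {..<6} \<Longrightarrow> lk (Eb \<beta>M m) j =
   (if j = 0 then int (nN m 0 + nN m 1) else if j = 1 then int (nN m 0 + nN m 2) else 0)"
  apply (simp add: lk_Eb6 sum6 \<beta>M_def M_cols_def nN_def)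
  using j_cases[of j] by (auto simp: nth_default_def)

lemma lmono_eq: "(\<lambda>i. lmono (cols ! i)) = (\<lambda>i. sg (Poly_Mapping.nth (cols ! i)) 1)"
  by (simp add: lmono_def)

lemma phiN_eq: "phiN = psubst (\<lambda>i. sg (\<beta>Nn i) 1)"
  by (simp add: phiN_def pmono_def \<beta>Nn_def)

lemma psubstN: "psubst (\<lambda>i. lmono (N_cols ! i)) = psubst (\<lambda>i. sg (\<beta>Ni i) 1)"
  by (simp add: lmono_def \<beta>Ni_def)

lemma psubstM: "psubst (\<lambda>i. lmono (M_cols ! i)) = psubst (\<lambda>i. sg (\<beta>M i) 1)"
  by (simp add: lmono_def \<beta>M_def)

lemma len_N [simp]: "length N_cols = 6" by (simp add: N_cols_def)
lemma len_M [simp]: "length M_cols = 6" by (simp add: M_cols_def)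

lemma IN_fiber:
  assumes "f \<in> (toric_ideal N_cols :: 'a::comm_ring_1 mpoly set)"
  shows "(\<Sum>m \<in> {m \<in> ks f. Eb \<beta>Ni m = e}. lk f m) = 0"
  using assms arg_cong[of _ _ "\<lambda>p. lk p e", OF conjunct2[OF assms[unfolded toric_ideal_def, simplified]]]
  by (simp add: psubstN lk_psubst_mono)

lemma IN_regroup:
  assumes "f \<in> (toric_ideal N_cols :: 'a::comm_ring_1 mpoly set)"
  shows "(\<Sum>m \<in> {m \<in> ks f. P (Eb \<beta>Ni m)}. lk f m) = 0"
  by (rule fiber_regroup[OF finite_keys]) (rule IN_fiber[OF assms])

lemma IM_fiber:
  assumes "f \<in> (toric_ideal M_cols :: 'a::comm_ring_1 mpoly set)"
  shows "(\<Sum>m \<in> {m \<in> ks f. Eb \<beta>M m = e}. lk f m) = 0"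
  using assms arg_cong[of _ _ "\<lambda>p. lk p e", OF conjunct2[OF assms[unfolded toric_ideal_def, simplified]]]
  by (simp add: psubstM lk_psubst_mono)

lemma IM_regroup:
  assumes "f \<in> (toric_ideal M_cols :: 'a::comm_ring_1 mpoly set)"
  shows "(\<Sum>m \<in> {m \<in> ks f. P (Eb \<beta>M m)}. lk f m) = 0"
  by (rule fiber_regroup[OF finite_keys]) (rule IM_fiber[OF assms])

lemma poly_ring_keys: "f \<in> poly_ring n \<Longrightarrow> m \<in> ks f \<Longrightarrow> ks m \<subseteq> {..<n}"
  by (auto simp: poly_ring_def)

lemma part1: "(toric_ideal N_cols :: 'a::comm_ring_1 mpoly set) \<subseteq> toric_ideal M_cols"
proof
  fix f :: "'a mpoly" assume f: "f \<in> toric_ideal N_cols"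
  then have fr: "f \<in> poly_ring 6" by (simp add: toric_ideal_def)
  define A where "A e = sg 0 (lk e 0 + lk e 1) + sg (1::nat) (lk e 0 + lk e (2::nat) :: int)" for e
  have "lk (psubst (\<lambda>i. sg (\<beta>M i) 1) f) w = 0" for w
  proof -
    have "{m \<in> ks f. Eb \<beta>M m = w} = {m \<in> ks f. (\<lambda>e. A e = w) (Eb \<beta>Ni m)}"
    proof (intro Collect_cong conj_cong refl)
      fix m assume "m \<in> ks f"
      then have k: "ks m \<subseteq> {..<6}" using poly_ring_keys[OF fr] by auto
      have "Eb \<beta>M m = A (Eb \<beta>Ni m)"
        apply (rule poly_mapping_eqI)
        subgoal for j using j_cases[of j] by (auto simp: EbM[OF k] EbNi[OF k] A_def lookup_add lookup_single)
        done
      then show "(Eb \<beta>M m = w) = (A (Eb \<beta>Ni m) = w)" by simp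
    qed
    then show ?thesis using IN_regroup[OF f, of "\<lambda>e. A e = w"] by (simp add: lk_psubst_mono)
  qed
  then have "psubst (\<lambda>i. sg (\<beta>M i) 1) f = 0" by (intro poly_mapping_eqI) simp
  then show "f \<in> toric_ideal M_cols" using fr by (simp add: toric_ideal_def psubstM)
qed

subsection \<open>Subring and ideals\<close>

lemma pr_add: "p \<in> poly_ring n \<Longrightarrow> q \<in> poly_ring n \<Longrightarrow> p + q \<in> poly_ring n"
  unfolding poly_ring_def using keys_add[of p q] by blast

lemma pr_uminus: "p \<in> poly_ring n \<Longrightarrow> - p \<in> poly_ring n"
  unfolding poly_ring_def by simp

lemma pr_diff: "p \<in> poly_ring n \<Longrightarrow> q \<in> poly_ring n \<Longrightarrow> p - q \<in> poly_ring n"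
  using pr_add[of p n "-q"] pr_uminus[of q n] by simp

lemma pr_mult: "p \<in> poly_ring n \<Longrightarrow> q \<in> poly_ring n \<Longrightarrow> p * q \<in> poly_ring n"
proof -
  assume p: "p \<in> poly_ring n" and q: "q \<in> poly_ring n"
  show ?thesis unfolding poly_ring_def
  proof (intro CollectI ballI subsetI)
    fix m x assume m: "m \<in> ks (p * q)" and x: "x \<in> ks m"
    from keys_mult[of p q] m obtain a b where "m = a + b" "a \<in> ks p" "b \<in> ks q" by blast
    then show "x \<in> {..<n}" using keys_add[of a b] p q x by (auto simp: poly_ring_def)
  qed
qed

lemma pr_single0: "sg 0 c \<in> poly_ring n"
  by (simp add: poly_ring_def)

lemma pr_one: "1 \<in> poly_ring n" using pr_single0[of 1] by simp
lemma pr_zero: "0 \<in> poly_ring n" using pr_single0[of 0] by simp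

lemma pr_Var: "i < n \<Longrightarrow> Var i \<in> poly_ring n"
  by (simp add: poly_ring_def Var_def)

lemma pr_power: "p \<in> poly_ring n \<Longrightarrow> p ^ k \<in> poly_ring n"
  by (induction k) (simp_all add: pr_one pr_mult)

lemma pr_sum: "(\<And>i. i \<in> A \<Longrightarrow> f i \<in> poly_ring n) \<Longrightarrow> sum f A \<in> poly_ring n"
  by (induction A rule: infinite_finite_induct) (simp_all add: pr_zero pr_add)

lemma pr_of_num: "(numeral n :: 'a::comm_ring_1 mpoly) \<in> poly_ring k"
  using pr_single0[of "numeral n"] by simp

lemmas pr_intros = pr_add pr_uminus pr_diff pr_mult pr_single0 pr_one pr_zero pr_Var pr_power pr_sum

lemma gen_mem: "s \<in> S \<Longrightarrow> s \<in> ideal_gen_in R S"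
  by (auto simp: ideal_gen_in_def)

lemma gen_add: "a \<in> ideal_gen_in R S \<Longrightarrow> b \<in> ideal_gen_in R S \<Longrightarrow> a + b \<in> ideal_gen_in R S"
  by (auto simp: ideal_gen_in_def is_ideal_in_def)

lemma gen_mult: "r \<in> R \<Longrightarrow> a \<in> ideal_gen_in R S \<Longrightarrow> r * a \<in> ideal_gen_in R S"
  by (auto simp: ideal_gen_in_def is_ideal_in_def)

lemma gen_least: "is_ideal_in R I \<Longrightarrow> S \<subseteq> I \<Longrightarrow> ideal_gen_in R S \<subseteq> I"
  by (auto simp: ideal_gen_in_def)

lemma gen_mono: "S \<subseteq> S' \<Longrightarrow> ideal_gen_in R S \<subseteq> ideal_gen_in R S'"
  by (auto simp: ideal_gen_in_def)

lemma rad_mono: "I \<subseteq> I' \<Longrightarrow> rad_in R I \<subseteq> rad_in R I'"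
  by (auto simp: rad_in_def)

lemma ideal_sum: "is_ideal_in R I \<Longrightarrow> (\<And>i. i \<in> A \<Longrightarrow> f i \<in> I) \<Longrightarrow> sum f A \<in> I"
  by (induction A rule: infinite_finite_induct) (auto simp: is_ideal_in_def)

subsection \<open>Concrete polynomials\<close>

lemma Var_pow: "(Var i :: 'a::comm_ring_1 mpoly) ^ k = sg (sg i k) 1"
  by (induction k) (simp_all add: Var_def mult_single single_add[symmetric])

lemma nth3: "Poly_Mapping.nth [a, b, c] = sg 0 a + sg 1 b + sg (2::nat) (c::'b::monoid_add)"
  apply (rule poly_mapping_eqI)
  subgoal for j using j_cases[of j] by (auto simp: lookup_add lookup_single nth_default_def)
  done

lemma nth2: "Poly_Mapping.nth [a, b] = sg 0 a + sg (1::nat) (b::'b::monoid_add)"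
  apply (rule poly_mapping_eqI)
  subgoal for j using j_cases[of j] by (auto simp: lookup_add lookup_single nth_default_def)
  done

lemma mon3: "sg (sg 0 a + sg 1 b + sg 2 c) 1 = (Var 0 ^ a * Var 1 ^ b * Var 2 ^ c :: 'a::comm_ring_1 mpoly)"
  apply (simp only: Var_pow)
  apply (simp only: mult_single)
  apply (simp only: mult_1)
  done

lemma pmono3: "pmono [a, b, c] = (Var 0 ^ a * Var 1 ^ b * Var 2 ^ c :: 'a::comm_ring_1 mpoly)"
  by (simp only: pmono_def nth3 mon3)

lemma f1_ring: "(Var 2 ^ 3 - Var 0 * Var 1 :: 'a::comm_ring_1 mpoly) \<in> poly_ring 6"
  by (intro pr_intros) auto
lemma f2_ring: "(Var 3 ^ 3 - Var 4 * Var 5 :: 'a::comm_ring_1 mpoly) \<in> poly_ring 6"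
  by (intro pr_intros) auto
lemma g_ring: "(Var 5 ^ 2 - Var 2 * Var 3 * Var 4 :: 'a::comm_ring_1 mpoly) \<in> poly_ring 6"
  by (intro pr_intros) auto

lemma phi_f1: "phiN (Var 2 ^ 3 - Var 0 * Var 1 :: 'a::comm_ring_1 mpoly) =
   Var 1 ^ 3 * (Var 1 ^ 3 * Var 2 ^ 3 - Var 0 ^ 3)"
  by (simp add: phiN_def psubst_simps N_cols_def pmono3 power3_eq_cube power2_eq_square algebra_simps)
lemma phi_f2: "phiN (Var 3 ^ 3 - Var 4 * Var 5 :: 'a::comm_ring_1 mpoly) =
   Var 2 ^ 3 * (Var 1 ^ 3 * Var 2 ^ 3 - Var 0 ^ 3)"
  by (simp add: phiN_def psubst_simps N_cols_def pmono3 power3_eq_cube power2_eq_square algebra_simps)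

lemma sg_pow2: "(sg x (1::'a::comm_ring_1)) ^ 2 = sg (x + x) 1"
  by (simp add: power2_eq_square mult_single)
lemma sg_pow3: "(sg x (1::'a::comm_ring_1)) ^ 3 = sg (x + x + x) 1"
  by (simp add: power3_eq_cube mult_single)

lemma lk_ofnat_mult: "lk (of_nat k * (p :: 'k::monoid_add \<Rightarrow>\<^sub>0 'b::semiring_1)) j = of_nat k * lk p j"
  by (induction k) (simp_all add: distrib_right lookup_add)

lemma lk_num_mult: "lk (numeral n * (p :: 'k::monoid_add \<Rightarrow>\<^sub>0 'b::semiring_1)) j = numeral n * lk p j"
  using lk_ofnat_mult[of "numeral n" p j] by simp

lemma f1_IM: "(Var 2 ^ 3 - Var 0 * Var 1 :: 'a::comm_ring_1 mpoly) \<in> toric_ideal M_cols"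
  unfolding toric_ideal_def len_M using f1_ring
  apply (simp add: psubst_simps M_cols_def lmono_def mult_single sg_pow3)
  apply (rule conjI, assumption)
  apply (rule arg_cong[where f="\<lambda>x. sg x 1"])
  apply (rule poly_mapping_eqI)
  subgoal for j using j_cases[of j] by (auto simp: lookup_add nth_default_def lk_num_mult)
  done

lemma f2_IM: "(Var 3 ^ 3 - Var 4 * Var 5 :: 'a::comm_ring_1 mpoly) \<in> toric_ideal M_cols"
  unfolding toric_ideal_def len_M using f2_ring
  apply (simp add: psubst_simps M_cols_def lmono_def mult_single sg_pow3)
  apply (rule conjI, assumption)
  apply (rule arg_cong[where f="\<lambda>x. sg x 1"])
  apply (rule poly_mapping_eqI)
  subgoal for j using j_cases[of j] by (auto simp: lookup_add nth_default_def lk_num_mult)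
  done

lemma g_IM: "(Var 5 ^ 2 - Var 2 * Var 3 * Var 4 :: 'a::comm_ring_1 mpoly) \<in> toric_ideal M_cols"
  unfolding toric_ideal_def len_M using g_ring
  apply (simp add: psubst_simps M_cols_def lmono_def mult_single sg_pow2)
  apply (rule conjI, assumption)
  apply (rule arg_cong[where f="\<lambda>x. sg x 1"])
  apply (rule poly_mapping_eqI)
  subgoal for j using j_cases[of j] by (auto simp: lookup_add nth_default_def lk_num_mult)
  done

lemma sg_sum: "sg k (\<Sum>i\<in>A. f i) = (\<Sum>i\<in>A. sg k (f i))"
  by (induction A rule: infinite_finite_induct) (simp_all add: single_add)

definition \<sigma>6 :: "nat \<Rightarrow> 'a::comm_ring_1 mpoly" where "\<sigma>6 i = (if i = 5 then 1 else 0)"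

lemma PP_\<sigma>6: "PP \<sigma>6 m = (if ks m \<subseteq> {5} then 1 else 0)"
proof (cases "ks m \<subseteq> {5}")
  case True then show ?thesis unfolding PP_def by (auto intro!: prod.neutral simp: \<sigma>6_def)
next
  case False
  then obtain i where i: "i \<in> ks m" "i \<noteq> 5" by auto
  then have "\<sigma>6 i ^ lk m i = 0" by (simp add: \<sigma>6_def in_keys_iff power_0_left)
  then have "PP \<sigma>6 m = 0" unfolding PP_def using i by (intro prod_zero) auto
  then show ?thesis using False by simp
qed

lemma keys6: "ks (m :: nat \<Rightarrow>\<^sub>0 nat) \<subseteq> {..<6} \<Longrightarrow> i \<in> ks m \<Longrightarrow> i = 0 \<or> i = 1 \<or> i = 2 \<or> i = 3 \<or> i = 4 \<or> i = 5"
  by auto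

lemma sub5: "ks (m :: nat \<Rightarrow>\<^sub>0 nat) \<subseteq> {..<6} \<Longrightarrow> ks m \<subseteq> {5} \<longleftrightarrow> lk m 0 = 0 \<and> lk m 1 = 0 \<and> lk m 2 = 0 \<and> lk m 3 = 0 \<and> lk m 4 = 0"
  apply (rule iffI)
   apply (auto simp: in_keys_iff)[1]
  apply (rule subsetI)
  subgoal for x using keys6[of m x] by (auto simp: in_keys_iff)
  done

lemma sub0: "ks (m :: nat \<Rightarrow>\<^sub>0 nat) \<subseteq> {..<6} \<Longrightarrow> ks m \<subseteq> {0} \<longleftrightarrow> lk m 1 = 0 \<and> lk m 2 = 0 \<and> lk m 3 = 0 \<and> lk m 4 = 0 \<and> lk m 5 = 0"
  apply (rule iffI)
   apply (auto simp: in_keys_iff)[1]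
  apply (rule subsetI)
  subgoal for x using keys6[of m x] by (auto simp: in_keys_iff)
  done

lemma IN_sum5:
  assumes f: "f \<in> (toric_ideal N_cols :: 'a::comm_ring_1 mpoly set)"
  shows "(\<Sum>m \<in> {m \<in> ks f. ks m \<subseteq> {5}}. lk f m) = 0"
proof -
  have fr: "f \<in> poly_ring 6" using f by (simp add: toric_ideal_def)
  have "{m \<in> ks f. ks m \<subseteq> {5}} = {m \<in> ks f. (\<lambda>e. lk e 1 = 0 \<and> lk e 0 = 2 * lk e 2) (Eb \<beta>Ni m)}"
  proof (intro Collect_cong conj_cong refl)
    fix m assume "m \<in> ks f"
    then have k: "ks m \<subseteq> {..<6}" using poly_ring_keys[OF fr] by auto
    show "(ks m \<subseteq> {5}) = (\<lambda>e. lk e 1 = 0 \<and> lk e 0 = 2 * lk e 2) (Eb \<beta>Ni m)"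
      by (simp add: EbNi[OF k] sub5[OF k] nN_def) linarith
  qed
  then show ?thesis using IN_regroup[OF f] by simp
qed

lemma IN_sum0:
  assumes f: "f \<in> (toric_ideal N_cols :: 'a::comm_ring_1 mpoly set)"
  shows "(\<Sum>m \<in> {m \<in> ks f. ks m \<subseteq> {0}}. lk f m) = 0"
proof -
  have fr: "f \<in> poly_ring 6" using f by (simp add: toric_ideal_def)
  have "{m \<in> ks f. ks m \<subseteq> {0}} = {m \<in> ks f. (\<lambda>e. lk e 2 = 0 \<and> lk e 0 = 2 * lk e 1) (Eb \<beta>Ni m)}"
  proof (intro Collect_cong conj_cong refl)
    fix m assume "m \<in> ks f"
    then have k: "ks m \<subseteq> {..<6}" using poly_ring_keys[OF fr] by auto
    show "(ks m \<subseteq> {0}) = (\<lambda>e. lk e 2 = 0 \<and> lk e 0 = 2 * lk e 1) (Eb \<beta>Ni m)"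
      by (simp add: EbNi[OF k] sub0[OF k] nN_def) linarith
  qed
  then show ?thesis using IN_regroup[OF f] by simp
qed

lemma ev_IN:
  assumes f: "f \<in> (toric_ideal N_cols :: 'a::comm_ring_1 mpoly set)"
  shows "psubst \<sigma>6 f = 0"
proof -
  have "psubst \<sigma>6 f = (\<Sum>m \<in> ks f. sg 0 (if ks m \<subseteq> {5} then lk f m else 0))"
    unfolding psubst_PP by (intro sum.cong refl) (simp add: PP_\<sigma>6)
  also have "\<dots> = sg 0 (\<Sum>m \<in> {m \<in> ks f. ks m \<subseteq> {5}}. lk f m)"
    by (simp only: sg_sum[symmetric] sum.inter_filter[OF finite_keys])
  also have "\<dots> = 0" using IN_sum5[OF f] by simp
  finally show ?thesis .
qed

definition "xpt = [1,0,0,0,0,0 :: 'a::field alg_closure]"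

lemma xpt_nth: "i < 6 \<Longrightarrow> xpt ! i = (if i = 0 then 1 else 0)"
proof -
  assume "i < 6"
  then have "i = 0 \<or> i = 1 \<or> i = 2 \<or> i = 3 \<or> i = 4 \<or> i = 5" by auto
  then show ?thesis by (auto simp: xpt_def)
qed

lemma eval_IN:
  assumes f: "f \<in> (toric_ideal N_cols :: 'a::field mpoly set)"
  shows "eval_ac f xpt = 0"
proof -
  have fr: "f \<in> poly_ring 6" using f by (simp add: toric_ideal_def)
  have P: "(\<Prod>i \<in> ks m. (xpt ! i) ^ lk m i) = (if ks m \<subseteq> {0} then 1 else (0 :: 'a alg_closure))"
    if m: "m \<in> ks f" for m
  proof -
    have k: "ks m \<subseteq> {..<6}" using poly_ring_keys[OF fr m] .
    show ?thesis
    proof (cases "ks m \<subseteq> {0}")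
      case True then show ?thesis by (auto intro!: prod.neutral simp: xpt_def)
    next
      case False
      then obtain i where i: "i \<in> ks m" "i \<noteq> 0" by auto
      have "i < 6" using k i by auto
      then have "(xpt ! i) ^ lk m i = (0 :: 'a alg_closure)" using i by (auto simp: xpt_nth in_keys_iff power_0_left)
      then have "(\<Prod>i \<in> ks m. (xpt ! i) ^ lk m i) = (0 :: 'a alg_closure)" using i by (intro prod_zero) auto
      then show ?thesis using False by simp
    qed
  qed
  have "eval_ac f xpt = (\<Sum>m \<in> ks f. to_ac (if ks m \<subseteq> {0} then lk f m else 0))"
    unfolding eval_ac_def by (intro sum.cong refl) (simp add: P)
  also have "\<dots> = to_ac (\<Sum>m \<in> {m \<in> ks f. ks m \<subseteq> {0}}. lk f m)"
    by (simp only: to_ac_sum[symmetric] sum.inter_filter[OF finite_keys])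
  also have "\<dots> = 0" using IN_sum0[OF f] by simp
  finally show ?thesis .
qed

lemma xpt_zero_set: "(xpt :: 'a::field alg_closure list) \<in> zero_set 6 (toric_ideal N_cols :: 'a mpoly set)"
  unfolding zero_set_def using eval_IN by (auto simp: xpt_def)

lemma xpt_Gamma: "(xpt :: 'a::field alg_closure list) \<notin> Gamma 3 N_cols"
proof
  assume "xpt \<in> (Gamma 3 N_cols :: 'a alg_closure list set)"
  then obtain T :: "nat \<Rightarrow> 'a alg_closure" where
    e: "xpt = map (\<lambda>b. \<Prod>j<3. T j ^ nat (b ! j)) N_cols" by (auto simp: Gamma_def)
  have p3: "(\<Prod>j<3. F j) = F 0 * F 1 * F (2::nat)" for F :: "nat \<Rightarrow> 'a alg_closure"
    by (simp add: numeral_3_eq_3 numeral_2_eq_2 lessThan_Suc mult_ac)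
  have "xpt ! 0 = (\<Prod>j<3. T j ^ nat ((N_cols ! 0) ! j))" "xpt ! 1 = (\<Prod>j<3. T j ^ nat ((N_cols ! 1) ! j))"
    by (subst e, simp)+
  then have "1 = T 0 ^ 2 * T 1" "0 = T 0 * T 1 ^ 2"
    by (simp_all only: p3) (simp_all add: xpt_def N_cols_def)
  then have "T 0 \<noteq> 0" "T 1 \<noteq> 0" by auto
  then have "T 0 * T 1 ^ 2 \<noteq> 0" by simp
  then show False using \<open>0 = T 0 * T 1 ^ 2\<close> by simp
qed

definition hh :: "'a::comm_ring_1 mpoly" where "hh = Var 1 ^ 3 * Var 2 ^ 3 - Var 0 ^ 3"

definition J0 :: "'a::comm_ring_1 mpoly set" where
  "J0 = {hh * (a * Var 1 + b * Var 2) | a b. a \<in> poly_ring 3 \<and> b \<in> poly_ring 3}"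

lemma hh_ring: "hh \<in> poly_ring 3"
  unfolding hh_def by (intro pr_intros) auto

lemma J0_ideal: "is_ideal_in (poly_ring 3) (J0 :: 'a::comm_ring_1 mpoly set)"
  unfolding is_ideal_in_def
proof (intro conjI ballI subsetI)
  fix x :: "'a mpoly" assume "x \<in> J0"
  then obtain a b where "x = hh * (a * Var 1 + b * Var 2)" "a \<in> poly_ring 3" "b \<in> poly_ring 3"
    by (auto simp: J0_def)
  then show "x \<in> poly_ring 3" using hh_ring by (auto intro!: pr_intros)
next
  show "(0 :: 'a mpoly) \<in> J0" unfolding J0_def by (auto intro!: exI[of _ 0] pr_zero)
next
  fix x y :: "'a mpoly" assume "x \<in> J0" "y \<in> J0"
  then obtain a b a' b' where "x = hh * (a * Var 1 + b * Var 2)" "a \<in> poly_ring 3" "b \<in> poly_ring 3"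
     "y = hh * (a' * Var 1 + b' * Var 2)" "a' \<in> poly_ring 3" "b' \<in> poly_ring 3"
    by (auto simp: J0_def)
  then show "x + y \<in> J0" unfolding J0_def
    by (intro CollectI exI[of _ "a + a'"] exI[of _ "b + b'"]) (auto simp: algebra_simps intro!: pr_intros)
next
  fix r x :: "'a mpoly" assume r: "r \<in> poly_ring 3" and "x \<in> J0"
  then obtain a b where "x = hh * (a * Var 1 + b * Var 2)" "a \<in> poly_ring 3" "b \<in> poly_ring 3"
    by (auto simp: J0_def)
  then show "r * x \<in> J0" unfolding J0_def using r
    by (intro CollectI exI[of _ "r * a"] exI[of _ "r * b"]) (auto simp: algebra_simps intro!: pr_intros)
qed

lemma J0I: "a \<in> poly_ring 3 \<Longrightarrow> b \<in> poly_ring 3 \<Longrightarrow> hh * (a * Var 1 + b * Var 2) \<in> J0"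
  unfolding J0_def by blast

lemma monodiff:
  fixes a b c :: nat
  assumes "b = 0 \<and> c = 0 \<longrightarrow> a = 0"
  shows "(Var 0 ^ a * Var 1 ^ b * Var 2 ^ c -
          Var 0 ^ (a mod 3) * Var 1 ^ (b + 3 * (a div 3)) * Var 2 ^ (c + 3 * (a div 3)) :: 'a::comm_ring_1 mpoly) \<in> J0"
proof -
  define q where "q = a div 3"
  define r where "r = a mod 3"
  define XX :: "'a mpoly" where "XX = Var 0 ^ 3"
  define YY :: "'a mpoly" where "YY = Var 1 ^ 3 * Var 2 ^ 3"
  define G where "G = (\<Sum>i<q. YY ^ (q - Suc i) * XX ^ i)"
  have G: "G \<in> poly_ring 3" unfolding G_def XX_def YY_def by (intro pr_intros) auto
  have a: "a = r + 3 * q" unfolding q_def r_def by simp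
  have e1: "(Var 0 ^ a :: 'a mpoly) = Var 0 ^ r * XX ^ q" unfolding a XX_def by (simp add: power_add power_mult)
  have e2: "(Var 1 ^ (b + 3 * q) * Var 2 ^ (c + 3 * q) :: 'a mpoly) = Var 1 ^ b * Var 2 ^ c * YY ^ q"
    unfolding YY_def power_add power_mult[of _ 3 q] by (simp add: power_mult_distrib mult_ac)
  have "XX ^ q - YY ^ q = (XX - YY) * G" unfolding G_def by (rule power_diff_sumr2)
  then have D: "(Var 0 ^ a * Var 1 ^ b * Var 2 ^ c -
          Var 0 ^ r * Var 1 ^ (b + 3 * q) * Var 2 ^ (c + 3 * q) :: 'a mpoly)
        = hh * (- (Var 0 ^ r * Var 1 ^ b * Var 2 ^ c * G))"
  proof -
    assume XXYY: "XX ^ q - YY ^ q = (XX - YY) * G"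
    have t1: "(Var 0 ^ a * Var 1 ^ b * Var 2 ^ c :: 'a mpoly) = (Var 0 ^ r * Var 1 ^ b * Var 2 ^ c) * XX ^ q"
      unfolding e1 by (simp add: mult_ac)
    have "(Var 0 ^ r * Var 1 ^ (b + 3 * q) * Var 2 ^ (c + 3 * q) :: 'a mpoly) = Var 0 ^ r * (Var 1 ^ (b + 3 * q) * Var 2 ^ (c + 3 * q))"
      by (simp only: mult.assoc)
    also have "\<dots> = Var 0 ^ r * (Var 1 ^ b * Var 2 ^ c * YY ^ q)" by (simp only: e2)
    also have "\<dots> = (Var 0 ^ r * Var 1 ^ b * Var 2 ^ c) * YY ^ q" by (simp only: mult.assoc)
    finally have t2: "(Var 0 ^ r * Var 1 ^ (b + 3 * q) * Var 2 ^ (c + 3 * q) :: 'a mpoly) = (Var 0 ^ r * Var 1 ^ b * Var 2 ^ c) * YY ^ q" .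
    have "(Var 0 ^ a * Var 1 ^ b * Var 2 ^ c -
          Var 0 ^ r * Var 1 ^ (b + 3 * q) * Var 2 ^ (c + 3 * q) :: 'a mpoly)
        = (Var 0 ^ r * Var 1 ^ b * Var 2 ^ c) * (XX ^ q - YY ^ q)"
      unfolding t1 t2 by (simp only: right_diff_distrib)
    also have "\<dots> = (Var 0 ^ r * Var 1 ^ b * Var 2 ^ c) * ((XX - YY) * G)" by (simp only: XXYY)
    also have "\<dots> = hh * (- (Var 0 ^ r * Var 1 ^ b * Var 2 ^ c * G))"
      by (simp add: hh_def XX_def YY_def algebra_simps)
    finally show ?thesis .
  qed
  have W: "Var 0 ^ r * Var 1 ^ b' * Var 2 ^ c' * G \<in> poly_ring 3" for b' c'
    using G by (intro pr_intros) auto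
  show ?thesis
  proof (cases "b > 0")
    case True
    have "hh * (- (Var 0 ^ r * Var 1 ^ b * Var 2 ^ c * G)) =
          hh * ((- (Var 0 ^ r * Var 1 ^ (b - 1) * Var 2 ^ c * G)) * Var 1 + 0 * Var 2)"
      using True by (cases b) (simp_all add: algebra_simps)
    then show ?thesis unfolding q_def[symmetric] r_def[symmetric] D
      by (simp only:) (rule J0I; use W G in \<open>auto intro!: pr_intros\<close>)
  next
    case False
    show ?thesis
    proof (cases "c > 0")
      case True
      have "hh * (- (Var 0 ^ r * Var 1 ^ b * Var 2 ^ c * G)) =
            hh * (0 * Var 1 + (- (Var 0 ^ r * Var 1 ^ b * Var 2 ^ (c - 1) * G)) * Var 2)"
        using True by (cases c) (simp_all add: algebra_simps)
      then show ?thesis unfolding q_def[symmetric] r_def[symmetric] D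
        by (simp only:) (rule J0I; use W G in \<open>auto intro!: pr_intros\<close>)
    next
      case False2: False
      then have "a = 0" using assms False by simp
      then have "q = 0" unfolding q_def by simp
      then have "G = 0" unfolding G_def by simp
      then have "hh * (- (Var 0 ^ r * Var 1 ^ b * Var 2 ^ c * G)) = hh * (0 * Var 1 + 0 * Var 2)"
        by simp
      then show ?thesis unfolding q_def[symmetric] r_def[symmetric] D
        by (simp only:) (rule J0I; auto intro!: pr_intros)
    qed
  qed
qed

abbreviation mon :: "nat \<Rightarrow> nat \<Rightarrow> nat \<Rightarrow> 'a::comm_ring_1 mpoly" where
  "mon a b c \<equiv> Var 0 ^ a * Var 1 ^ b * Var 2 ^ c"

lemma phiN_mono:
  assumes fr: "(f :: 'a::comm_ring_1 mpoly) \<in> poly_ring 6"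
  shows "phiN f = (\<Sum>m \<in> ks f. sg 0 (lk f m) * mon (nN m 0) (nN m 1) (nN m 2))"
  unfolding phiN_eq psubst_mono
proof (intro sum.cong refl)
  fix m assume "m \<in> ks f"
  then have k: "ks m \<subseteq> {..<6}" using poly_ring_keys[OF fr] by auto
  show "sg (Eb \<beta>Nn m) (lk f m) = sg 0 (lk f m) * mon (nN m 0) (nN m 1) (nN m 2)"
    unfolding EbNn[OF k] mon3[symmetric] by (simp add: mult_single)
qed

lemma arith3:
  fixes n0 n1 n2 s :: nat
  assumes "n0 + n1 + n2 = 3 * s"
  shows "nat ((int (n0 + n1) + int (n0 + n2)) mod 3) = n0 mod 3"
    "nat (int (n0 + n1)) - n0 mod 3 = n1 + 3 * (n0 div 3)"
    "nat (int (n0 + n2)) - n0 mod 3 = n2 + 3 * (n0 div 3)"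
proof -
  have "int (n0 + n1) + int (n0 + n2) = int (2*n0+n1+n2)" by simp
  also have "\<dots> mod 3 = int ((2*n0+n1+n2) mod 3)" by (simp add: of_nat_mod)
  finally have e: "nat ((int (n0 + n1) + int (n0 + n2)) mod 3) = (2*n0+n1+n2) mod 3" by simp
  have "2*n0+n1+n2 = n0 + s * 3" using assms by simp
  then show "nat ((int (n0 + n1) + int (n0 + n2)) mod 3) = n0 mod 3" unfolding e by (simp only:) simp
  have d: "n0 div 3 * 3 + n0 mod 3 = n0" by (rule div_mult_mod_eq)
  show "nat (int (n0 + n1)) - n0 mod 3 = n1 + 3 * (n0 div 3)"
    unfolding nat_int using d by linarith
  show "nat (int (n0 + n2)) - n0 mod 3 = n2 + 3 * (n0 div 3)"
    unfolding nat_int using d by linarith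
qed

lemma rho_zero:
  assumes f: "(f :: 'a::comm_ring_1 mpoly) \<in> toric_ideal M_cols"
  shows "(\<Sum>m \<in> ks f. sg 0 (lk f m) *
      mon (nN m 0 mod 3) (nN m 1 + 3 * (nN m 0 div 3)) (nN m 2 + 3 * (nN m 0 div 3))) = 0"
proof -
  have fr: "f \<in> poly_ring 6" using f by (simp add: toric_ideal_def)
  define r where "r w = nat ((lk w 0 + lk w 1) mod 3)" for w :: "nat \<Rightarrow>\<^sub>0 int"
  define \<tau> where "\<tau> w = (sg (0::nat) (r w) + sg 1 (nat (lk w 0) - r w) + sg 2 (nat (lk w 1) - r w) :: nat \<Rightarrow>\<^sub>0 nat)" for w
  have "(\<Sum>m \<in> ks f. sg 0 (lk f m) *
      mon (nN m 0 mod 3) (nN m 1 + 3 * (nN m 0 div 3)) (nN m 2 + 3 * (nN m 0 div 3)))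
     = (\<Sum>m \<in> ks f. sg (\<tau> (Eb \<beta>M m)) (lk f m))"
  proof (intro sum.cong refl)
    fix m assume "m \<in> ks f"
    then have k: "ks m \<subseteq> {..<6}" using poly_ring_keys[OF fr] by auto
    have s: "nN m 0 + nN m 1 + nN m 2 = 3 * (lk m 0 + lk m 1 + lk m 2 + lk m 3 + lk m 4 + lk m 5)"
      by (simp add: nN_def)
    have t: "\<tau> (Eb \<beta>M m) = sg 0 (nN m 0 mod 3) + sg 1 (nN m 1 + 3 * (nN m 0 div 3)) + sg 2 (nN m 2 + 3 * (nN m 0 div 3))"
      unfolding \<tau>_def r_def EbM[OF k] using arith3[OF s] by simp
    show "sg 0 (lk f m) * mon (nN m 0 mod 3) (nN m 1 + 3 * (nN m 0 div 3)) (nN m 2 + 3 * (nN m 0 div 3))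
        = sg (\<tau> (Eb \<beta>M m)) (lk f m)"
      unfolding t mon3[symmetric] by (simp add: mult_single)
  qed
  also have "\<dots> = 0"
  proof (rule poly_mapping_eqI)
    fix d
    have "lk (\<Sum>m \<in> ks f. sg (\<tau> (Eb \<beta>M m)) (lk f m)) d = (\<Sum>m \<in> {m \<in> ks f. (\<lambda>e. \<tau> e = d) (Eb \<beta>M m)}. lk f m)"
      by (simp add: lookup_sum lookup_single when_def sum.inter_filter)
    also have "\<dots> = 0" by (rule IM_regroup[OF f])
    finally show "lk (\<Sum>m \<in> ks f. sg (\<tau> (Eb \<beta>M m)) (lk f m)) d = lk 0 d" by simp
  qed
  finally show ?thesis .
qed

lemma phiN_IM:
  assumes f: "(f :: 'a::comm_ring_1 mpoly) \<in> toric_ideal M_cols"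
  shows "phiN f \<in> J0"
proof -
  have fr: "f \<in> poly_ring 6" using f by (simp add: toric_ideal_def)
  let ?A = "\<lambda>m. sg 0 (lk f m) * mon (nN m 0) (nN m 1) (nN m 2)"
  let ?B = "\<lambda>m. sg 0 (lk f m) *
      mon (nN m 0 mod 3) (nN m 1 + 3 * (nN m 0 div 3)) (nN m 2 + 3 * (nN m 0 div 3))"
  have "phiN f = (\<Sum>m \<in> ks f. ?A m)" by (rule phiN_mono[OF fr])
  also have "\<dots> = (\<Sum>m \<in> ks f. ?A m - ?B m) + (\<Sum>m \<in> ks f. ?B m)"
    by (simp add: sum_subtractf)
  also have "(\<Sum>m \<in> ks f. ?B m) = 0" by (rule rho_zero[OF f])
  finally have e: "phiN f = (\<Sum>m \<in> ks f. ?A m - ?B m)" by simp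
  show ?thesis unfolding e
  proof (rule ideal_sum[OF J0_ideal])
    fix m assume "m \<in> ks f"
    have c: "nN m 1 = 0 \<and> nN m 2 = 0 \<longrightarrow> nN m 0 = 0" by (simp add: nN_def)
    have "?A m - ?B m = sg 0 (lk f m) * (mon (nN m 0) (nN m 1) (nN m 2) -
      mon (nN m 0 mod 3) (nN m 1 + 3 * (nN m 0 div 3)) (nN m 2 + 3 * (nN m 0 div 3)))"
      by (simp add: right_diff_distrib)
    also have "\<dots> \<in> J0"
      using J0_ideal monodiff[OF c] pr_single0 unfolding is_ideal_in_def by blast
    finally show "?A m - ?B m \<in> J0" .
  qed
qed

lemma pow5a:
  fixes a b u v :: "'a::comm_ring_1"
  shows "(a * u + b * v) ^ 5 =
    u ^ 3 * (a ^ 5 * u ^ 2 + 5 * a ^ 4 * b * u * v + 10 * a ^ 3 * b ^ 2 * v ^ 2) +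
    v ^ 3 * (10 * a ^ 2 * b ^ 3 * u ^ 2 + 5 * a * b ^ 4 * u * v + b ^ 5 * v ^ 2)"
  by (simp add: eval_nat_numeral algebra_simps)

lemma pow5b:
  fixes h x y A B :: "'a::comm_ring_1"
  shows "h ^ 5 * (x * A + y * B) = (h ^ 4 * A) * (x * h) + (h ^ 4 * B) * (y * h)"
  by (simp add: eval_nat_numeral algebra_simps)

lemma pow5_identity:
  fixes h a b u v :: "'a::comm_ring_1"
  shows "(h * (a * u + b * v)) ^ 5 =
    (h ^ 4 * (a ^ 5 * u ^ 2 + 5 * a ^ 4 * b * u * v + 10 * a ^ 3 * b ^ 2 * v ^ 2)) * (u ^ 3 * h) +
    (h ^ 4 * (10 * a ^ 2 * b ^ 3 * u ^ 2 + 5 * a * b ^ 4 * u * v + b ^ 5 * v ^ 2)) * (v ^ 3 * h)"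
  unfolding power_mult_distrib[of h] pow5a by (rule pow5b)

lemma part2:
  "rad_in (poly_ring 3) (ideal_gen_in (poly_ring 3) (phiN ` (toric_ideal M_cols :: 'a::comm_ring_1 mpoly set)))
   = rad_in (poly_ring 3) (ideal_gen_in (poly_ring 3)
       {phiN (Var 2 ^ 3 - Var 0 * Var 1 :: 'a mpoly), phiN (Var 3 ^ 3 - Var 4 * Var 5)})"
  (is "rad_in ?R (ideal_gen_in ?R ?S) = rad_in ?R (ideal_gen_in ?R ?T)")
proof
  show "rad_in ?R (ideal_gen_in ?R ?T) \<subseteq> rad_in ?R (ideal_gen_in ?R ?S)"
    by (intro rad_mono gen_mono) (use f1_IM f2_IM in blast)
next
  show "rad_in ?R (ideal_gen_in ?R ?S) \<subseteq> rad_in ?R (ideal_gen_in ?R ?T)"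
  proof
    fix x assume "x \<in> rad_in ?R (ideal_gen_in ?R ?S)"
    then obtain k where x: "x \<in> ?R" "k > 0" "x ^ k \<in> ideal_gen_in ?R ?S" by (auto simp: rad_in_def)
    have "ideal_gen_in ?R ?S \<subseteq> J0"
      by (rule gen_least[OF J0_ideal]) (auto intro: phiN_IM)
    with x obtain a b where ab: "x ^ k = hh * (a * Var 1 + b * Var 2)" "a \<in> ?R" "b \<in> ?R"
      by (auto simp: J0_def)
    define A where "A = hh ^ 4 * (a ^ 5 * Var 1 ^ 2 + 5 * a ^ 4 * b * Var 1 * Var 2 + 10 * a ^ 3 * b ^ 2 * Var 2 ^ 2)"
    define B where "B = hh ^ 4 * (10 * a ^ 2 * b ^ 3 * Var 1 ^ 2 + 5 * a * b ^ 4 * Var 1 * Var 2 + b ^ 5 * Var 2 ^ 2)"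
    have AB: "A \<in> ?R" "B \<in> ?R" unfolding A_def B_def using ab hh_ring
      by (auto intro!: pr_intros simp del: of_nat_numeral simp add: pr_of_num)
    have "x ^ (k * 5) = A * (Var 1 ^ 3 * hh) + B * (Var 2 ^ 3 * hh)"
      unfolding power_mult ab(1) A_def B_def by (rule pow5_identity)
    also have "\<dots> \<in> ideal_gen_in ?R ?T"
      unfolding phi_f1[folded hh_def, symmetric] phi_f2[folded hh_def, symmetric]
      by (intro gen_add gen_mult AB gen_mem) auto
    finally show "x \<in> rad_in ?R (ideal_gen_in ?R ?T)" using x by (auto simp: rad_in_def intro!: exI[of _ "k * 5"])
  qed
qed


lemma part5:
  "(Var 5 ^ 2 - Var 2 * Var 3 * Var 4 :: 'a::comm_ring_1 mpoly) ^ k \<notin>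
     ideal_gen_in (poly_ring 6) (toric_ideal N_cols \<union> {Var 2 ^ 3 - Var 0 * Var 1, Var 3 ^ 3 - Var 4 * Var 5})"
proof
  define Z :: "'a mpoly set" where "Z = {p \<in> poly_ring 6. psubst \<sigma>6 p = 0}"
  have Zi: "is_ideal_in (poly_ring 6) Z"
    unfolding is_ideal_in_def Z_def by (auto simp: psubst_add psubst_mult pr_add pr_mult pr_zero)
  have S: "toric_ideal N_cols \<union> {Var 2 ^ 3 - Var 0 * Var 1, Var 3 ^ 3 - Var 4 * Var 5} \<subseteq> Z"
    unfolding Z_def using ev_IN f1_ring f2_ring
    by (auto simp: toric_ideal_def psubst_simps \<sigma>6_def)
  assume "(Var 5 ^ 2 - Var 2 * Var 3 * Var 4 :: 'a mpoly) ^ k \<in>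
     ideal_gen_in (poly_ring 6) (toric_ideal N_cols \<union> {Var 2 ^ 3 - Var 0 * Var 1, Var 3 ^ 3 - Var 4 * Var 5})"
  then have "(Var 5 ^ 2 - Var 2 * Var 3 * Var 4 :: 'a mpoly) ^ k \<in> Z" using gen_least[OF Zi S] by blast
  then have "psubst \<sigma>6 ((Var 5 ^ 2 - Var 2 * Var 3 * Var 4 :: 'a mpoly) ^ k) = 0" by (simp add: Z_def)
  then show False by (simp add: psubst_simps \<sigma>6_def)
qed

theorem mainTheorem4:
  defines "f1 \<equiv> (Var 2 ^ 3 - Var 0 * Var 1 :: 'a::field mpoly)"
      and "f2 \<equiv> (Var 3 ^ 3 - Var 4 * Var 5 :: 'a::field mpoly)"
      and "g \<equiv> (Var 5 ^ 2 - Var 2 * Var 3 * Var 4 :: 'a::field mpoly)"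
  shows "(toric_ideal N_cols :: 'a mpoly set) \<subseteq> toric_ideal M_cols \<and>
         rad_in (poly_ring 3) (ideal_gen_in (poly_ring 3) (phiN ` (toric_ideal M_cols :: 'a mpoly set)))
         = rad_in (poly_ring 3) (ideal_gen_in (poly_ring 3) {phiN f1, phiN f2}) \<and>
         (toric_ideal M_cols :: 'a mpoly set)
         \<noteq> rad_in (poly_ring 6) (ideal_gen_in (poly_ring 6) (toric_ideal N_cols \<union> {f1, f2})) \<and>
         g \<in> toric_ideal M_cols \<and>
         ((\<forall>k. g ^ k \<notin> ideal_gen_in (poly_ring 6) (toric_ideal N_cols \<union> {f1, f2}))) \<and>
         (Gamma 3 N_cols :: 'a alg_closure list set) \<noteq> zero_set 6 (toric_ideal N_cols :: 'a mpoly set)"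
proof -
  have p5: "\<forall>k. g ^ k \<notin> ideal_gen_in (poly_ring 6) (toric_ideal N_cols \<union> {f1, f2})"
    unfolding assms using part5 by blast
  have gI: "g \<in> toric_ideal M_cols" unfolding assms by (rule g_IM)
  have p3: "(toric_ideal M_cols :: 'a mpoly set)
         \<noteq> rad_in (poly_ring 6) (ideal_gen_in (poly_ring 6) (toric_ideal N_cols \<union> {f1, f2}))"
  proof
    assume "(toric_ideal M_cols :: 'a mpoly set)
         = rad_in (poly_ring 6) (ideal_gen_in (poly_ring 6) (toric_ideal N_cols \<union> {f1, f2}))"
    then have "g \<in> rad_in (poly_ring 6) (ideal_gen_in (poly_ring 6) (toric_ideal N_cols \<union> {f1, f2}))"
      using gI by simp
    then show False using p5 by (auto simp: rad_in_def)
  qed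
  have p6: "(Gamma 3 N_cols :: 'a alg_closure list set) \<noteq> zero_set 6 (toric_ideal N_cols :: 'a mpoly set)"
    using xpt_zero_set xpt_Gamma by blast
  have p2: "rad_in (poly_ring 3) (ideal_gen_in (poly_ring 3) (phiN ` (toric_ideal M_cols :: 'a mpoly set)))
         = rad_in (poly_ring 3) (ideal_gen_in (poly_ring 3) {phiN f1, phiN f2})"
    unfolding assms by (rule part2)
  have p1: "(toric_ideal N_cols :: 'a mpoly set) \<subseteq> toric_ideal M_cols" by (rule part1)
  show ?thesis by (intro conjI p1 p2 p3 gI p5 p6)
qed

end
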